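(* Let $N\ge 2$ and $R\ge 3$, and let $S=\lfloor R/3\rfloor$. For every $c<2-\tfrac{1}{2^S}$, there is no $c$-approximation randomized online algorithm for the minimum congestion routing problem in the Clos network $C_{N,R}$.
   Context: Clos network $C_{N,R}$: a directed graph with $N$ middle switches $M_1,\dots,M_N$, $R$ input switches $I_1,\dots,I_R$, $R$ output switches $O_1,\dots,O_R$, source servers $s_i^k$ and destination servers $t_i^k$ ($i\in[R]$, $k\in[N]$), and edges $s_i^kI_i$, $I_iM_m$, $M_mO_i$, $O_it_i^k$ for all $i\in[R]$, $m,k\in[N]$; all links have capacity $1$. A flow $f$ has a source server $s(f)$ of input switch $I_{i(f)}$, a destination server $t(f)$ of output switch $O_{j(f)}$, and a positive demand $\mathrm{dem}(f)$; a set of flows must have total demand at most $1$ leaving each source server and entering each destination server. A routing $r$ assigns each flow a single middle switch $r(f)\in[N]$; its congestion is $\max_{i\in[R],m\in[N]}\max\{\sum_{f:i(f)=i,r(f)=m}\mathrm{dem}(f),\ \sum_{f:j(f)=i,r(f)=m}\mathrm{dem}(f)\}$; $OPT(\mathcal{F})$ is the minimum congestion over all routings of $\mathcal{F}$. A deterministic online algorithm defines a routing for every sequence of flows such that for every prefix $P$ of a sequence $F$, the routing of $P$ when given $P$ equals the routing of $P$ when given $F$. A randomized online algorithm is a probability distribution over deterministic online algorithms; it is a $c$-approximation if for every sequence $\mathcal{F}$ of flows its expected congestion is at most $c\cdot OPT(\mathcal{F})$. *)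

theory Defs
  imports "HOL-Probability.Probability"
begin

text \<open>Indices are 0-based: input/output switches 0..<R,
  middle switches 0..<N, servers of each switch 0..<N.
  A flow records: index of the input switch i(f), index k of its source server s_{i(f)}^k,
  index of the output switch j(f), index of its destination server t_{j(f)}^k', and its demand.\<close>

datatype flow = Flow (src_sw: nat) (src_srv: nat) (dst_sw: nat) (dst_srv: nat) (dem: real)

definition valid_seq :: "nat \<Rightarrow> nat \<Rightarrow> flow list \<Rightarrow> bool" where
  "valid_seq N R F \<longleftrightarrow>
     (\<forall>f\<in>set F. src_sw f < R \<and> src_srv f < N \<and> dst_sw f < R \<and> dst_srv f < N \<and> dem f > 0) \<and>
     (\<forall>i<R. \<forall>k<N. (\<Sum>p\<in>{p. p < length F \<and> src_sw (F!p) = i \<and> src_srv (F!p) = k}. dem (F!p)) \<le> 1) \<and>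
     (\<forall>i<R. \<forall>k<N. (\<Sum>p\<in>{p. p < length F \<and> dst_sw (F!p) = i \<and> dst_srv (F!p) = k}. dem (F!p)) \<le> 1)"

text \<open>A routing of F: the p-th flow is routed through middle switch r!p.\<close>
definition is_routing :: "nat \<Rightarrow> flow list \<Rightarrow> nat list \<Rightarrow> bool" where
  "is_routing N F r \<longleftrightarrow> length r = length F \<and> (\<forall>m\<in>set r. m < N)"

definition load_in :: "flow list \<Rightarrow> nat list \<Rightarrow> nat \<Rightarrow> nat \<Rightarrow> real" where
  "load_in F r i m = (\<Sum>p\<in>{p. p < length F \<and> src_sw (F!p) = i \<and> r!p = m}. dem (F!p))"

definition load_out :: "flow list \<Rightarrow> nat list \<Rightarrow> nat \<Rightarrow> nat \<Rightarrow> real" where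
  "load_out F r i m = (\<Sum>p\<in>{p. p < length F \<and> dst_sw (F!p) = i \<and> r!p = m}. dem (F!p))"

definition congestion :: "nat \<Rightarrow> nat \<Rightarrow> flow list \<Rightarrow> nat list \<Rightarrow> real" where
  "congestion N R F r = Max ((\<lambda>(i, m). max (load_in F r i m) (load_out F r i m)) ` ({..<R} \<times> {..<N}))"

definition OPT :: "nat \<Rightarrow> nat \<Rightarrow> flow list \<Rightarrow> real" where
  "OPT N R F = Min (congestion N R F ` {r. is_routing N F r})"

definition det_online_alg :: "nat \<Rightarrow> nat \<Rightarrow> (flow list \<Rightarrow> nat list) \<Rightarrow> bool" where
  "det_online_alg N R A \<longleftrightarrow>
     (\<forall>F. valid_seq N R F \<longrightarrow>
        is_routing N F (A F) \<and> (\<forall>k\<le>length F. A (take k F) = take k (A F)))"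

text \<open>Randomized online algorithm: a probability distribution (probability space M) over
  deterministic online algorithms (A \<omega> for \<omega> in the sample space); it is a c-approximation
  if its expected congestion is at most c * OPT on every admissible sequence.\<close>
definition randomized_approx ::
  "nat \<Rightarrow> nat \<Rightarrow> real \<Rightarrow> 'a measure \<Rightarrow> ('a \<Rightarrow> flow list \<Rightarrow> nat list) \<Rightarrow> bool" where
  "randomized_approx N R c M A \<longleftrightarrow>
     prob_space M \<and>
     (\<forall>\<omega>\<in>space M. det_online_alg N R (A \<omega>)) \<and>
     (\<forall>F. valid_seq N R F \<longrightarrow> (\<lambda>\<omega>. A \<omega> F) \<in> M \<rightarrow>\<^sub>M count_space UNIV) \<and>
     (\<forall>F. valid_seq N R F \<longrightarrow>
        (\<integral>\<omega>. congestion N R F (A \<omega> F) \<partial>M) \<le> c * OPT N R F)"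

end

theory Submission
  imports Defs
begin


definition GF :: "nat \<Rightarrow> nat \<Rightarrow> bool \<Rightarrow> flow list" where
 "GF N g b = [Flow (3*g) 0 (3*g) 0 1, Flow (3*g+1) 0 (3*g+1) 0 1] @
   (if b then Flow (3*g+2) 0 (3*g) 1 1 # map (\<lambda>k. Flow (3*g+2) k (3*g+1) k 1) [1..<N]
    else map (\<lambda>k. Flow (3*g) k (3*g+1) k 1) [1..<N])"

fun seqF :: "nat \<Rightarrow> nat \<Rightarrow> bool list \<Rightarrow> flow list" where
  "seqF N g [] = []"
| "seqF N g (b # bs) = GF N g b @ seqF N (Suc g) bs"

definition GR :: "nat \<Rightarrow> bool \<Rightarrow> nat list" where
 "GR N b = (if b then [0,1] @ 1 # map (\<lambda>k. if k = 1 then 0 else k) [1..<N] else [0,0] @ [1..<N])"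

fun seqR :: "nat \<Rightarrow> bool list \<Rightarrow> nat list" where
  "seqR N [] = []"
| "seqR N (b # bs) = GR N b @ seqR N bs"

definition goodpairs :: "flow list \<Rightarrow> nat list \<Rightarrow> bool" where
 "goodpairs F r \<longleftrightarrow>
   (\<forall>p<length F. \<forall>q<length F. p \<noteq> q \<longrightarrow> src_sw (F!p) = src_sw (F!q) \<longrightarrow> r!p \<noteq> r!q) \<and>
   (\<forall>p<length F. \<forall>q<length F. p \<noteq> q \<longrightarrow> dst_sw (F!p) = dst_sw (F!q) \<longrightarrow> r!p \<noteq> r!q)"

lemma len_GF: "length (GF N g b) = (if b then N - 1 + 3 else N - 1 + 2)"
  by (simp add: GF_def)

lemma len_GR: "length (GR N b) = length (GF N g b)"
  by (simp add: GR_def GF_def)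

lemma len_seqR: "length (seqR N bs) = length (seqF N g bs)"
  by (induction bs arbitrary: g) (auto simp: len_GF GR_def)

lemma set_seqF_sw: "f \<in> set (seqF N g bs) \<Longrightarrow>
   3*g \<le> src_sw f \<and> 3*g \<le> dst_sw f \<and> src_sw f < 3*(g + length bs) \<and> dst_sw f < 3*(g + length bs)"
proof (induction bs arbitrary: g)
  case Nil thus ?case by simp
next
  case (Cons b bs)
  show ?case
  proof (cases "f \<in> set (GF N g b)")
    case True thus ?thesis by (auto simp: GF_def split: if_splits)
  next
    case False
    hence "f \<in> set (seqF N (Suc g) bs)" using Cons.prems by simp
    from Cons.IH[OF this] show ?thesis by simp
  qed
qed

lemma set_seqF: "N \<ge> 2 \<Longrightarrow> f \<in> set (seqF N g bs) \<Longrightarrow>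
   3*g \<le> src_sw f \<and> 3*g \<le> dst_sw f \<and> src_sw f < 3*(g + length bs) \<and> dst_sw f < 3*(g + length bs)
   \<and> src_srv f < N \<and> dst_srv f < N \<and> dem f = 1"
proof (induction bs arbitrary: g)
  case Nil thus ?case by simp
next
  case (Cons b bs)
  show ?case
  proof (cases "f \<in> set (GF N g b)")
    case True thus ?thesis using Cons.prems by (auto simp: GF_def split: if_splits)
  next
    case False
    hence "f \<in> set (seqF N (Suc g) bs)" using Cons.prems by simp
    from Cons.IH[OF Cons.prems(1) this] show ?thesis by simp
  qed
qed

lemma seqF_nonempty: "bs \<noteq> [] \<Longrightarrow> seqF N g bs \<noteq> []"
  by (cases bs) (auto simp: GF_def)

lemma distinct_src: "distinct (map (\<lambda>f. (src_sw f, src_srv f)) (seqF N g bs))"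
proof (induction bs arbitrary: g)
  case Nil thus ?case by simp
next
  case (Cons b bs)
  have d1: "distinct (map (\<lambda>f. (src_sw f, src_srv f)) (GF N g b))"
    by (auto simp: GF_def distinct_map inj_on_def)
  have d2: "set (map (\<lambda>f. (src_sw f, src_srv f)) (GF N g b)) \<inter> set (map (\<lambda>f. (src_sw f, src_srv f)) (seqF N (Suc g) bs)) = {}"
  proof -
    { fix f f' assume "f \<in> set (GF N g b)" "f' \<in> set (seqF N (Suc g) bs)"
      "src_sw f = src_sw f'"
      moreover have "src_sw f < 3*g+3" using \<open>f \<in> set (GF N g b)\<close> by (auto simp: GF_def split: if_splits)
      moreover have "3 * Suc g \<le> src_sw f'" using set_seqF_sw[OF \<open>f' \<in> set (seqF N (Suc g) bs)\<close>] by blast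
      ultimately have False by simp }
    thus ?thesis by fastforce
  qed
  show ?case using d1 d2 Cons.IH by simp
qed

lemma distinct_dst: "distinct (map (\<lambda>f. (dst_sw f, dst_srv f)) (seqF N g bs))"
proof (induction bs arbitrary: g)
  case Nil thus ?case by simp
next
  case (Cons b bs)
  have d1: "distinct (map (\<lambda>f. (dst_sw f, dst_srv f)) (GF N g b))"
    by (auto simp: GF_def distinct_map inj_on_def)
  have d2: "set (map (\<lambda>f. (dst_sw f, dst_srv f)) (GF N g b)) \<inter> set (map (\<lambda>f. (dst_sw f, dst_srv f)) (seqF N (Suc g) bs)) = {}"
  proof -
    { fix f f' assume "f \<in> set (GF N g b)" "f' \<in> set (seqF N (Suc g) bs)"
      "dst_sw f = dst_sw f'"
      moreover have "dst_sw f < 3*g+3" using \<open>f \<in> set (GF N g b)\<close> by (auto simp: GF_def split: if_splits)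
      moreover have "3 * Suc g \<le> dst_sw f'" using set_seqF_sw[OF \<open>f' \<in> set (seqF N (Suc g) bs)\<close>] by blast
      ultimately have False by simp }
    thus ?thesis by fastforce
  qed
  show ?case using d1 d2 Cons.IH by simp
qed

lemma zip_maps: "zip (map f xs) (map g xs) = map (\<lambda>x. (f x, g x)) xs"
  by (induction xs) auto
lemma zip_map_same: "zip (map f xs) xs = map (\<lambda>x. (f x, x)) xs"
  by (induction xs) auto

lemma distinct_zsrc: "distinct (zip (map src_sw (seqF N g bs)) (seqR N bs))"
proof (induction bs arbitrary: g)
  case Nil thus ?case by simp
next
  case (Cons b bs)
  have e: "zip (map src_sw (seqF N g (b#bs))) (seqR N (b#bs)) =
    zip (map src_sw (GF N g b)) (GR N b) @ zip (map src_sw (seqF N (Suc g) bs)) (seqR N bs)"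
    by (simp add: zip_append len_GR[of N b g])
  have d1: "distinct (zip (map src_sw (GF N g b)) (GR N b))"
    by (cases b) (auto simp: GF_def GR_def zip_maps zip_map_same distinct_map inj_on_def split: if_splits)
  have d2: "set (zip (map src_sw (GF N g b)) (GR N b)) \<inter> set (zip (map src_sw (seqF N (Suc g) bs)) (seqR N bs)) = {}"
  proof -
    { fix a m assume "(a,m) \<in> set (zip (map src_sw (GF N g b)) (GR N b))"
        "(a,m) \<in> set (zip (map src_sw (seqF N (Suc g) bs)) (seqR N bs))"
      hence "a \<in> src_sw ` set (GF N g b)" "a \<in> src_sw ` set (seqF N (Suc g) bs)"
        by (auto dest!: set_zip_leftD)
      then obtain f f' where "f \<in> set (GF N g b)" "f' \<in> set (seqF N (Suc g) bs)"
        "src_sw f = src_sw f'" by auto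
      moreover have "src_sw f < 3*g+3" using \<open>f \<in> set (GF N g b)\<close> by (auto simp: GF_def split: if_splits)
      moreover have "3 * Suc g \<le> src_sw f'" using set_seqF_sw[OF \<open>f' \<in> set (seqF N (Suc g) bs)\<close>] by blast
      ultimately have False by simp }
    thus ?thesis by fastforce
  qed
  show ?case using d1 d2 Cons.IH e by simp
qed

lemma distinct_zdst: "distinct (zip (map dst_sw (seqF N g bs)) (seqR N bs))"
proof (induction bs arbitrary: g)
  case Nil thus ?case by simp
next
  case (Cons b bs)
  have e: "zip (map dst_sw (seqF N g (b#bs))) (seqR N (b#bs)) =
    zip (map dst_sw (GF N g b)) (GR N b) @ zip (map dst_sw (seqF N (Suc g) bs)) (seqR N bs)"
    by (simp add: zip_append len_GR[of N b g])
  have d1: "distinct (zip (map dst_sw (GF N g b)) (GR N b))"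
    by (cases b) (auto simp: GF_def GR_def zip_maps zip_map_same distinct_map inj_on_def split: if_splits)
  have d2: "set (zip (map dst_sw (GF N g b)) (GR N b)) \<inter> set (zip (map dst_sw (seqF N (Suc g) bs)) (seqR N bs)) = {}"
  proof -
    { fix a m assume "(a,m) \<in> set (zip (map dst_sw (GF N g b)) (GR N b))"
        "(a,m) \<in> set (zip (map dst_sw (seqF N (Suc g) bs)) (seqR N bs))"
      hence "a \<in> dst_sw ` set (GF N g b)" "a \<in> dst_sw ` set (seqF N (Suc g) bs)"
        by (auto dest!: set_zip_leftD)
      then obtain f f' where "f \<in> set (GF N g b)" "f' \<in> set (seqF N (Suc g) bs)"
        "dst_sw f = dst_sw f'" by auto
      moreover have "dst_sw f < 3*g+3" using \<open>f \<in> set (GF N g b)\<close> by (auto simp: GF_def split: if_splits)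
      moreover have "3 * Suc g \<le> dst_sw f'" using set_seqF_sw[OF \<open>f' \<in> set (seqF N (Suc g) bs)\<close>] by blast
      ultimately have False by simp }
    thus ?thesis by fastforce
  qed
  show ?case using d1 d2 Cons.IH e by simp
qed

lemma set_seqR: "N \<ge> 2 \<Longrightarrow> m \<in> set (seqR N bs) \<Longrightarrow> m < N"
  by (induction bs) (auto simp: GR_def split: if_splits)



lemma L0:
  assumes F: "F = Q @ [Flow x 0 x 0 1, Flow y 0 y 0 1] @ map (\<lambda>k. Flow x k y k 1) [1..<N] @ X"
  and gp: "goodpairs F r" and lr: "length r = length F" and rN: "set r \<subseteq> {..<N}" and N: "N \<ge> 2"
  shows "r ! length Q = r ! Suc (length Q)"
proof (rule ccontr)
  assume ne: "r ! length Q \<noteq> r ! Suc (length Q)"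
  define q where "q = length Q"
  define m where "m j = r ! (q+2+j)" for j
  have gs: "\<And>p p'. p < length F \<Longrightarrow> p' < length F \<Longrightarrow> p \<noteq> p' \<Longrightarrow> src_sw (F!p) = src_sw (F!p') \<Longrightarrow> r!p \<noteq> r!p'"
   and gd: "\<And>p p'. p < length F \<Longrightarrow> p' < length F \<Longrightarrow> p \<noteq> p' \<Longrightarrow> dst_sw (F!p) = dst_sw (F!p') \<Longrightarrow> r!p \<noteq> r!p'"
    using gp unfolding goodpairs_def by blast+
  have lenF: "length F = q + 2 + (N-1) + length X" using F q_def by simp
  have Fj: "F!(q+2+j) = Flow x (Suc j) y (Suc j) 1" if "j < N-1" for j
    using that by (simp add: F q_def nth_append)
  have Fq: "F!q = Flow x 0 x 0 1" "F!(Suc q) = Flow y 0 y 0 1"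
    by (simp_all add: F q_def nth_append)
  have rlt: "r!p < N" if "p < length F" for p
  proof -
    have "r!p \<in> set r" using that lr by simp
    thus ?thesis using rN by blast
  qed
  have inj: "inj_on m {..<N-1}"
  proof (rule inj_onI, rule ccontr)
    fix i j assume "i \<in> {..<N-1}" "j \<in> {..<N-1}" "m i = m j" "i \<noteq> j"
    moreover have "q+2+i < length F" "q+2+j < length F" using lenF \<open>i \<in> {..<N-1}\<close> \<open>j \<in> {..<N-1}\<close> by auto
    ultimately show False using gs[of "q+2+i" "q+2+j"] Fj[of i] Fj[of j] by (auto simp: m_def)
  qed
  have sub: "m ` {..<N-1} \<subseteq> {..<N} - {r!q, r!Suc q}"
  proof
    fix v assume "v \<in> m ` {..<N-1}"
    then obtain j where j: "j < N-1" "v = m j" by auto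
    have jl: "q+2+j < length F" "q < length F" "Suc q < length F" using lenF j by auto
    have "v < N" using rlt[of "q+2+j"] j jl by (simp add: m_def)
    moreover have "v \<noteq> r!q" using gs[of "q+2+j" q] j jl Fj[of j] Fq by (auto simp: m_def)
    moreover have "v \<noteq> r!Suc q" using gd[of "q+2+j" "Suc q"] j jl Fj[of j] Fq by (auto simp: m_def)
    ultimately show "v \<in> {..<N} - {r!q, r!Suc q}" by simp
  qed
  have c1: "card (m ` {..<N-1}) = N - 1" using card_image[OF inj] by simp
  have "r!q < N" "r!Suc q < N" using rlt[of q] rlt[of "Suc q"] lenF by simp_all
  hence c2: "card ({..<N} - {r!q, r!Suc q}) = N - 2"
    using ne q_def by (subst card_Diff_subset) auto
  have "card (m ` {..<N-1}) \<le> card ({..<N} - {r!q, r!Suc q})"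
    by (rule card_mono[OF _ sub]) simp
  thus False using c1 c2 N by simp
qed

lemma L1:
  assumes F: "F = Q @ [Flow x 0 x 0 1, Flow y 0 y 0 1] @ Flow z 0 x 1 1 # map (\<lambda>k. Flow z k y k 1) [1..<N] @ X"
  and gp: "goodpairs F r" and lr: "length r = length F" and rN: "set r \<subseteq> {..<N}" and N: "N \<ge> 2"
  shows "r ! length Q \<noteq> r ! Suc (length Q)"
proof
  assume eq: "r ! length Q = r ! Suc (length Q)"
  define q where "q = length Q"
  define m where "m j = r ! (q+2+j)" for j
  have gs: "\<And>p p'. p < length F \<Longrightarrow> p' < length F \<Longrightarrow> p \<noteq> p' \<Longrightarrow> src_sw (F!p) = src_sw (F!p') \<Longrightarrow> r!p \<noteq> r!p'"
   and gd: "\<And>p p'. p < length F \<Longrightarrow> p' < length F \<Longrightarrow> p \<noteq> p' \<Longrightarrow> dst_sw (F!p) = dst_sw (F!p') \<Longrightarrow> r!p \<noteq> r!p'"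
    using gp unfolding goodpairs_def by blast+
  have lenF: "length F = q + 3 + (N-1) + length X" using F q_def by simp
  have F0: "F!(q+2) = Flow z 0 x 1 1" by (simp add: F q_def nth_append)
  have Fj: "F!(q+2+Suc j) = Flow z (Suc j) y (Suc j) 1" if "j < N-1" for j
    using that by (simp add: F q_def nth_append)
  have Fsrc: "src_sw (F!(q+2+j)) = z" if "j < N" for j
    using that F0 Fj[of "j - 1"] by (cases j) auto
  have Fq: "F!q = Flow x 0 x 0 1" "F!(Suc q) = Flow y 0 y 0 1"
    by (simp_all add: F q_def nth_append)
  have rlt: "r!p < N" if "p < length F" for p
  proof -
    have "r!p \<in> set r" using that lr by simp
    thus ?thesis using rN by blast
  qed
  have inj: "inj_on m {..<N}"
  proof (rule inj_onI, rule ccontr)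
    fix i j assume "i \<in> {..<N}" "j \<in> {..<N}" "m i = m j" "i \<noteq> j"
    moreover have "q+2+i < length F" "q+2+j < length F" using lenF \<open>i \<in> {..<N}\<close> \<open>j \<in> {..<N}\<close> by auto
    ultimately show False using gs[of "q+2+i" "q+2+j"] Fsrc[of i] Fsrc[of j] by (auto simp: m_def)
  qed
  have sub: "m ` {..<N} \<subseteq> {..<N} - {r!q}"
  proof
    fix v assume "v \<in> m ` {..<N}"
    then obtain j where j: "j < N" "v = m j" by auto
    have jl: "q+2+j < length F" "q < length F" "Suc q < length F" using lenF j by auto
    have "v < N" using rlt[of "q+2+j"] j jl by (simp add: m_def)
    moreover have "v \<noteq> r!q"
    proof (cases j)
      case 0
      thus ?thesis using gd[of "q+2" q] j jl F0 Fq by (auto simp: m_def)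
    next
      case (Suc j')
      thus ?thesis using gd[of "q+2+Suc j'" "Suc q"] j jl Fj[of j'] Fq eq q_def by (auto simp: m_def)
    qed
    ultimately show "v \<in> {..<N} - {r!q}" by simp
  qed
  have c1: "card (m ` {..<N}) = N" using card_image[OF inj] by simp
  have "r!q < N" using rlt[of q] lenF by simp
  hence c2: "card ({..<N} - {r!q}) = N - 1" by simp
  have "card (m ` {..<N}) \<le> card ({..<N} - {r!q})"
    by (rule card_mono[OF _ sub]) simp
  thus False using c1 c2 N by simp
qed



lemma uniq:
  assumes "length bs = length bs'" "goodpairs (Q @ seqF N g bs) r" "goodpairs (Q @ seqF N g bs') r'"
    "length r = length (Q @ seqF N g bs)" "length r' = length (Q @ seqF N g bs')"
    "set r \<subseteq> {..<N}" "set r' \<subseteq> {..<N}" "N \<ge> 2"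
    "\<forall>k. k \<le> length (Q @ seqF N g bs) \<longrightarrow> k \<le> length (Q @ seqF N g bs') \<longrightarrow>
        take k (Q @ seqF N g bs) = take k (Q @ seqF N g bs') \<longrightarrow> take k r = take k r'"
  shows "bs = bs'"
  using assms
proof (induction bs arbitrary: bs' Q g)
  case Nil thus ?case by simp
next
  case (Cons b bs)
  then obtain b' bs2 where bs': "bs' = b' # bs2" by (cases bs') auto
  show ?case
  proof (cases "b = b'")
    case True
    have e1: "Q @ seqF N g (b#bs) = (Q @ GF N g b) @ seqF N (Suc g) bs" by simp
    have e2: "Q @ seqF N g bs' = (Q @ GF N g b) @ seqF N (Suc g) bs2" using bs' True by simp
    have "bs = bs2"
      by (rule Cons.IH[of bs2 "Q @ GF N g b" "Suc g"]) (use Cons.prems bs' e1 e2 in auto)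
    thus ?thesis using bs' True by simp
  next
    case False
    define q where "q = length Q"
    define f1 where "f1 = Flow (3*g) 0 (3*g) 0 1"
    define f2 where "f2 = Flow (3*g+1) 0 (3*g+1) 0 1"
    have pre: "take (q+2) (Q @ seqF N g (b#bs)) = Q @ [f1, f2]"
      "take (q+2) (Q @ seqF N g bs') = Q @ [f1, f2]"
      using bs' by (simp_all add: GF_def q_def f1_def f2_def)
    have len: "q+2 \<le> length (Q @ seqF N g (b#bs))" "q+2 \<le> length (Q @ seqF N g bs')"
      using bs' by (simp_all add: GF_def q_def)
    have tk: "take (q+2) r = take (q+2) r'"
    proof -
      have "take (q+2) (Q @ seqF N g (b#bs)) = take (q+2) (Q @ seqF N g bs')" using pre by simp
      thus ?thesis using Cons.prems(9) len by blast
    qed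
    have a1: "r!q = r'!q"
      using arg_cong[OF tk, of "\<lambda>l. l!q"] by simp
    have a2: "r!Suc q = r'!Suc q"
      using arg_cong[OF tk, of "\<lambda>l. l!Suc q"] by simp
    have F0: "Q @ seqF N g (False#X) = Q @ [Flow (3*g) 0 (3*g) 0 1, Flow (3*g+1) 0 (3*g+1) 0 1] @
        map (\<lambda>k. Flow (3*g) k (3*g+1) k 1) [1..<N] @ seqF N (Suc g) X" for X
      by (simp add: GF_def)
    have F1: "Q @ seqF N g (True#X) = Q @ [Flow (3*g) 0 (3*g) 0 1, Flow (3*g+1) 0 (3*g+1) 0 1] @
        Flow (3*g+2) 0 (3*g) 1 1 # map (\<lambda>k. Flow (3*g+2) k (3*g+1) k 1) [1..<N] @ seqF N (Suc g) X" for X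
      by (simp add: GF_def)
    show ?thesis
    proof (cases b)
      case True
      hence b': "\<not> b'" using False by simp
      have "r!q \<noteq> r!Suc q"
        using L1[OF F1[of bs], of r] Cons.prems True q_def by simp
      moreover have "r'!q = r'!Suc q"
        using L0[OF F0[of bs2], of r'] Cons.prems b' bs' q_def by simp
      ultimately show ?thesis using a1 a2 by simp
    next
      case fb: False
      hence b': "b'" using False by simp
      have "r!q = r!Suc q"
        using L0[OF F0[of bs], of r] Cons.prems fb q_def by simp
      moreover have "r'!q \<noteq> r'!Suc q"
        using L1[OF F1[of bs2], of r'] Cons.prems b' bs' q_def by simp
      ultimately show ?thesis using a1 a2 by simp
    qed
  qed
qed



lemma sum_le1:
  assumes "finite P" "\<forall>p\<in>P. \<forall>q\<in>P. p = q" "\<forall>p\<in>P. d p = (1::real)"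
  shows "sum d P \<le> 1"
proof (cases "P = {}")
  case True thus ?thesis by simp
next
  case False
  then obtain p where "p \<in> P" by blast
  hence "P = {p}" using assms(2) by blast
  thus ?thesis using assms(3) by simp
qed

lemma valid_seqF:
  assumes N: "N \<ge> 2" and R: "3 * length bs \<le> R"
  shows "valid_seq N R (seqF N 0 bs)"
proof -
  define F where "F = seqF N 0 bs"
  have setF: "\<And>f. f \<in> set F \<Longrightarrow> src_sw f < R \<and> src_srv f < N \<and> dst_sw f < R \<and> dst_srv f < N \<and> dem f = 1"
    using set_seqF[OF N, of _ 0 bs] R unfolding F_def by fastforce
  have dem1: "\<And>p. p < length F \<Longrightarrow> dem (F!p) = 1" using setF nth_mem by blast
  have ds: "distinct (map (\<lambda>f. (src_sw f, src_srv f)) F)" unfolding F_def by (rule distinct_src)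
  have dd: "distinct (map (\<lambda>f. (dst_sw f, dst_srv f)) F)" unfolding F_def by (rule distinct_dst)
  have s1: "(\<Sum>p\<in>{p. p < length F \<and> src_sw (F!p) = i \<and> src_srv (F!p) = k}. dem (F!p)) \<le> 1" for i k
  proof (rule sum_le1)
    show "\<forall>p\<in>{p. p < length F \<and> src_sw (F!p) = i \<and> src_srv (F!p) = k}. \<forall>q\<in>{p. p < length F \<and> src_sw (F!p) = i \<and> src_srv (F!p) = k}. p = q"
    proof (intro ballI)
      fix p q assume "p \<in> {p. p < length F \<and> src_sw (F!p) = i \<and> src_srv (F!p) = k}"
        "q \<in> {p. p < length F \<and> src_sw (F!p) = i \<and> src_srv (F!p) = k}"
      hence "p < length F" "q < length F"
        "map (\<lambda>f. (src_sw f, src_srv f)) F ! p = map (\<lambda>f. (src_sw f, src_srv f)) F ! q" by auto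
      thus "p = q" using nth_eq_iff_index_eq[OF ds] by simp
    qed
  qed (auto simp: dem1)
  have s2: "(\<Sum>p\<in>{p. p < length F \<and> dst_sw (F!p) = i \<and> dst_srv (F!p) = k}. dem (F!p)) \<le> 1" for i k
  proof (rule sum_le1)
    show "\<forall>p\<in>{p. p < length F \<and> dst_sw (F!p) = i \<and> dst_srv (F!p) = k}. \<forall>q\<in>{p. p < length F \<and> dst_sw (F!p) = i \<and> dst_srv (F!p) = k}. p = q"
    proof (intro ballI)
      fix p q assume "p \<in> {p. p < length F \<and> dst_sw (F!p) = i \<and> dst_srv (F!p) = k}"
        "q \<in> {p. p < length F \<and> dst_sw (F!p) = i \<and> dst_srv (F!p) = k}"
      hence "p < length F" "q < length F"
        "map (\<lambda>f. (dst_sw f, dst_srv f)) F ! p = map (\<lambda>f. (dst_sw f, dst_srv f)) F ! q" by auto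
      thus "p = q" using nth_eq_iff_index_eq[OF dd] by simp
    qed
  qed (auto simp: dem1)
  show ?thesis unfolding valid_seq_def F_def[symmetric] using setF s1 s2 by auto
qed

lemma cong_ge:
  assumes "i < R" "m < N"
  shows "max (load_in F r i m) (load_out F r i m) \<le> congestion N R F r"
  unfolding congestion_def by (rule Max_ge) (use assms in auto)

lemma load_in_ge:
  assumes d: "\<forall>f\<in>set F. dem f = 1" and "P \<subseteq> {p. p < length F \<and> src_sw (F!p) = i \<and> r!p = m}"
  shows "real (card P) \<le> load_in F r i m"
proof -
  have fin: "finite {p. p < length F \<and> src_sw (F!p) = i \<and> r!p = m}" by simp
  have "(\<Sum>p\<in>P. dem (F!p)) = (\<Sum>p\<in>P. (1::real))" by (rule sum.cong) (use assms in \<open>auto simp: nth_mem\<close>)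
  hence "real (card P) = (\<Sum>p\<in>P. dem (F!p))" by simp
  also have "\<dots> \<le> load_in F r i m" unfolding load_in_def
    by (rule sum_mono2[OF fin assms(2)]) (use d in auto)
  finally show ?thesis .
qed

lemma load_out_ge:
  assumes d: "\<forall>f\<in>set F. dem f = 1" and "P \<subseteq> {p. p < length F \<and> dst_sw (F!p) = i \<and> r!p = m}"
  shows "real (card P) \<le> load_out F r i m"
proof -
  have fin: "finite {p. p < length F \<and> dst_sw (F!p) = i \<and> r!p = m}" by simp
  have "(\<Sum>p\<in>P. dem (F!p)) = (\<Sum>p\<in>P. (1::real))" by (rule sum.cong) (use assms in \<open>auto simp: nth_mem\<close>)
  hence "real (card P) = (\<Sum>p\<in>P. dem (F!p))" by simp
  also have "\<dots> \<le> load_out F r i m" unfolding load_out_def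
    by (rule sum_mono2[OF fin assms(2)]) (use d in auto)
  finally show ?thesis .
qed

lemma cong_ge2:
  assumes v: "valid_seq N R F" and ro: "is_routing N F r" and d: "\<forall>f\<in>set F. dem f = 1"
    and ng: "\<not> goodpairs F r"
  shows "2 \<le> congestion N R F r"
proof -
  have lr: "length r = length F" and rN: "\<And>p. p < length F \<Longrightarrow> r!p < N"
    using ro unfolding is_routing_def by (auto simp: nth_mem)
  have sw: "\<And>p. p < length F \<Longrightarrow> src_sw (F!p) < R \<and> dst_sw (F!p) < R"
    using v unfolding valid_seq_def by (auto simp: nth_mem)
  from ng obtain p p' where pp: "p < length F" "p' < length F" "p \<noteq> p'" "r!p = r!p'"
    "src_sw (F!p) = src_sw (F!p') \<or> dst_sw (F!p) = dst_sw (F!p')"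
    unfolding goodpairs_def by blast
  have c2: "card {p, p'} = 2" using pp by simp
  show ?thesis
  proof (cases "src_sw (F!p) = src_sw (F!p')")
    case True
    have "real (card {p,p'}) \<le> load_in F r (src_sw (F!p)) (r!p)"
      by (rule load_in_ge[OF d]) (use pp True in auto)
    also have "\<dots> \<le> congestion N R F r"
      using cong_ge[of "src_sw (F!p)" R "r!p" N F r] sw[OF pp(1)] rN[OF pp(1)] by simp
    finally show ?thesis using c2 by simp
  next
    case False
    hence dd: "dst_sw (F!p) = dst_sw (F!p')" using pp by blast
    have "real (card {p,p'}) \<le> load_out F r (dst_sw (F!p)) (r!p)"
      by (rule load_out_ge[OF d]) (use pp dd in auto)
    also have "\<dots> \<le> congestion N R F r"
      using cong_ge[of "dst_sw (F!p)" R "r!p" N F r] sw[OF pp(1)] rN[OF pp(1)] by simp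
    finally show ?thesis using c2 by simp
  qed
qed

lemma cong_ge1:
  assumes v: "valid_seq N R F" and ro: "is_routing N F r" and d: "\<forall>f\<in>set F. dem f = 1"
    and ne: "F \<noteq> []"
  shows "1 \<le> congestion N R F r"
proof -
  have p: "0 < length F" using ne by simp
  have rN: "r!0 < N"
    using ro p unfolding is_routing_def by (auto simp: nth_mem)
  have sw: "src_sw (F!0) < R"
    using v p unfolding valid_seq_def by (auto simp: nth_mem)
  have "real (card {0::nat}) \<le> load_in F r (src_sw (F!0)) (r!0)"
    by (rule load_in_ge[OF d]) (use p in auto)
  also have "\<dots> \<le> congestion N R F r"
    using cong_ge[of "src_sw (F!0)" R "r!0" N F r] sw rN by simp
  finally show ?thesis by simp
qed

lemma cong_le_len:
  assumes d: "\<forall>f\<in>set F. dem f = 1" and R: "R > 0" and N: "N > 0"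
  shows "congestion N R F r \<le> real (length F)"
proof -
  have tot: "(\<Sum>p\<in>{..<length F}. dem (F!p)) = real (length F)"
    using d by (simp add: nth_mem)
  have li: "load_in F r i m \<le> real (length F)" for i m
    unfolding load_in_def tot[symmetric] by (rule sum_mono2) (use d in \<open>auto simp: nth_mem\<close>)
  have lo: "load_out F r i m \<le> real (length F)" for i m
    unfolding load_out_def tot[symmetric] by (rule sum_mono2) (use d in \<open>auto simp: nth_mem\<close>)
  show ?thesis unfolding congestion_def
    using R N li lo by (subst Max_le_iff) auto
qed

lemma cong_le1:
  assumes d: "\<forall>f\<in>set F. dem f = 1" and R: "R > 0" and N: "N > 0"
    and ds: "distinct (zip (map src_sw F) r)" and dd: "distinct (zip (map dst_sw F) r)"
    and lr: "length r = length F"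
  shows "congestion N R F r \<le> 1"
proof -
  have dem1: "\<And>p. p < length F \<Longrightarrow> dem (F!p) = 1" using d nth_mem by blast
  have li: "load_in F r i m \<le> 1" for i m unfolding load_in_def
  proof (rule sum_le1)
    show "\<forall>p\<in>{p. p < length F \<and> src_sw (F!p) = i \<and> r!p = m}. \<forall>q\<in>{p. p < length F \<and> src_sw (F!p) = i \<and> r!p = m}. p = q"
    proof (intro ballI)
      fix p q assume "p \<in> {p. p < length F \<and> src_sw (F!p) = i \<and> r!p = m}"
        "q \<in> {p. p < length F \<and> src_sw (F!p) = i \<and> r!p = m}"
      hence "p < length (zip (map src_sw F) r)" "q < length (zip (map src_sw F) r)"
        "zip (map src_sw F) r ! p = zip (map src_sw F) r ! q" using lr by auto
      thus "p = q" using nth_eq_iff_index_eq[OF ds] by blast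
    qed
  qed (auto simp: dem1)
  have lo: "load_out F r i m \<le> 1" for i m unfolding load_out_def
  proof (rule sum_le1)
    show "\<forall>p\<in>{p. p < length F \<and> dst_sw (F!p) = i \<and> r!p = m}. \<forall>q\<in>{p. p < length F \<and> dst_sw (F!p) = i \<and> r!p = m}. p = q"
    proof (intro ballI)
      fix p q assume "p \<in> {p. p < length F \<and> dst_sw (F!p) = i \<and> r!p = m}"
        "q \<in> {p. p < length F \<and> dst_sw (F!p) = i \<and> r!p = m}"
      hence "p < length (zip (map dst_sw F) r)" "q < length (zip (map dst_sw F) r)"
        "zip (map dst_sw F) r ! p = zip (map dst_sw F) r ! q" using lr by auto
      thus "p = q" using nth_eq_iff_index_eq[OF dd] by blast
    qed
  qed (auto simp: dem1)
  show ?thesis unfolding congestion_def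
    using R N li lo by (subst Max_le_iff) auto
qed



lemma routings_finite: "finite {r. is_routing N F r}"
proof -
  have "{r. is_routing N F r} = {r. set r \<subseteq> {..<N} \<and> length r = length F}"
    unfolding is_routing_def by auto
  thus ?thesis using finite_lists_length_eq[of "{..<N}" "length F"] by simp
qed

lemma OPT_le1:
  assumes N: "N \<ge> 2" and R: "3 * length bs \<le> R" "R > 0"
  shows "OPT N R (seqF N 0 bs) \<le> 1"
proof -
  define F where "F = seqF N 0 bs"
  have ro: "is_routing N F (seqR N bs)"
    unfolding is_routing_def F_def using len_seqR[of N bs 0] set_seqR[OF N] by auto
  have d: "\<forall>f\<in>set F. dem f = 1" using set_seqF[OF N] unfolding F_def by blast
  have "congestion N R F (seqR N bs) \<le> 1"
    by (rule cong_le1[OF d]) (use R N distinct_zsrc[of N 0 bs] distinct_zdst[of N 0 bs] len_seqR[of N bs 0] in \<open>auto simp: F_def\<close>)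
  moreover have "OPT N R F \<le> congestion N R F (seqR N bs)"
    unfolding OPT_def by (rule Min_le) (use routings_finite ro in auto)
  ultimately show ?thesis unfolding F_def by simp
qed

lemma OPT_ge0:
  assumes v: "valid_seq N R F" and d: "\<forall>f\<in>set F. dem f = 1" and ne: "F \<noteq> []"
  shows "0 \<le> OPT N R F"
proof -
  have ro: "is_routing N F (replicate (length F) 0)" if "N > 0" unfolding is_routing_def using that by simp
  have "N > 0"
  proof -
    have "src_srv (F!0) < N" using v ne unfolding valid_seq_def by (auto simp: nth_mem)
    thus ?thesis by simp
  qed
  hence nem: "congestion N R F ` {r. is_routing N F r} \<noteq> {}" using ro by blast
  have "OPT N R F \<in> congestion N R F ` {r. is_routing N F r}"
    unfolding OPT_def by (rule Min_in) (use routings_finite nem in auto)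
  then obtain r where "is_routing N F r" "OPT N R F = congestion N R F r" by auto
  with cong_ge1[OF v _ d ne] show ?thesis by fastforce
qed

theorem mainTheorem7:
  fixes N R :: nat and c :: real
    and M :: "'a measure" and A :: "'a \<Rightarrow> flow list \<Rightarrow> nat list"
  assumes "N \<ge> 2" and "R \<ge> 3" and "c < 2 - 1 / 2 ^ (R div 3)"
  shows "\<not> randomized_approx N R c M A"
proof
  assume ra: "randomized_approx N R c M A"
  have N: "N \<ge> 2" using assms by simp
  have ps: "prob_space M" and det: "\<And>\<omega>. \<omega> \<in> space M \<Longrightarrow> det_online_alg N R (A \<omega>)"
    and meas: "\<And>F. valid_seq N R F \<Longrightarrow> (\<lambda>\<omega>. A \<omega> F) \<in> M \<rightarrow>\<^sub>M count_space UNIV"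
    and bnd: "\<And>F. valid_seq N R F \<Longrightarrow> (\<integral>\<omega>. congestion N R F (A \<omega> F) \<partial>M) \<le> c * OPT N R F"
    using ra unfolding randomized_approx_def by auto
  interpret prob_space M by (rule ps)
  define S where "S = R div 3"
  have S1: "S \<ge> 1" and S3: "3 * S \<le> R" using assms(2) unfolding S_def by auto
  define L where "L = {bs::bool list. set bs \<subseteq> UNIV \<and> length bs = S}"
  have finL: "finite L" unfolding L_def by (rule finite_lists_length_eq) simp
  have cardL: "card L = 2 ^ S" unfolding L_def by (subst card_lists_length_eq) auto
  define Fs where "Fs bs = seqF N 0 bs" for bs
  have valid: "valid_seq N R (Fs bs)" if "bs \<in> L" for bs
    unfolding Fs_def by (rule valid_seqF[OF N]) (use that S3 in \<open>auto simp: L_def\<close>)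
  have dem1: "\<forall>f\<in>set (Fs bs). dem f = 1" for bs using set_seqF[OF N] unfolding Fs_def by blast
  have nonemp: "Fs bs \<noteq> []" if "bs \<in> L" for bs
    unfolding Fs_def by (rule seqF_nonempty) (use that S1 in \<open>auto simp: L_def\<close>)
  define E where "E bs = {\<omega> \<in> space M. goodpairs (Fs bs) (A \<omega> (Fs bs))}" for bs
  have Esets: "E bs \<in> sets M" if "bs \<in> L" for bs
  proof -
    have "E bs = (\<lambda>\<omega>. A \<omega> (Fs bs)) -` {r. goodpairs (Fs bs) r} \<inter> space M"
      unfolding E_def by auto
    also have "\<dots> \<in> sets M" by (rule measurable_sets[OF meas[OF valid[OF that]]]) simp
    finally show ?thesis .
  qed
  have rout: "is_routing N (Fs bs) (A \<omega> (Fs bs))" if "bs \<in> L" "\<omega> \<in> space M" for bs \<omega>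
    using det[OF that(2)] valid[OF that(1)] unfolding det_online_alg_def by blast
  have disj: "disjoint_family_on E L"
  unfolding disjoint_family_on_def
  proof (intro ballI impI)
    fix bs bs' assume bs: "bs \<in> L" "bs' \<in> L" "bs \<noteq> bs'"
    show "E bs \<inter> E bs' = {}"
    proof (rule ccontr)
      assume "E bs \<inter> E bs' \<noteq> {}"
      then obtain \<omega> where w: "\<omega> \<in> space M" "goodpairs (Fs bs) (A \<omega> (Fs bs))"
        "goodpairs (Fs bs') (A \<omega> (Fs bs'))" unfolding E_def by auto
      have cons: "\<And>F k. valid_seq N R F \<Longrightarrow> k \<le> length F \<Longrightarrow> A \<omega> (take k F) = take k (A \<omega> F)"
        using det[OF w(1)] unfolding det_online_alg_def by blast
      have "bs = bs'"
      proof (rule uniq[of bs bs' "[]" N 0])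
        show "length bs = length bs'" using bs by (simp add: L_def)
        show "goodpairs ([] @ seqF N 0 bs) (A \<omega> (Fs bs))" using w by (simp add: Fs_def)
        show "goodpairs ([] @ seqF N 0 bs') (A \<omega> (Fs bs'))" using w by (simp add: Fs_def)
        show "length (A \<omega> (Fs bs)) = length ([] @ seqF N 0 bs)"
          using rout[OF bs(1) w(1)] by (simp add: is_routing_def Fs_def)
        show "length (A \<omega> (Fs bs')) = length ([] @ seqF N 0 bs')"
          using rout[OF bs(2) w(1)] by (simp add: is_routing_def Fs_def)
        show "set (A \<omega> (Fs bs)) \<subseteq> {..<N}"
          using rout[OF bs(1) w(1)] by (auto simp: is_routing_def)
        show "set (A \<omega> (Fs bs')) \<subseteq> {..<N}"
          using rout[OF bs(2) w(1)] by (auto simp: is_routing_def)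
        show "N \<ge> 2" by (rule N)
        show "\<forall>k. k \<le> length ([] @ seqF N 0 bs) \<longrightarrow> k \<le> length ([] @ seqF N 0 bs') \<longrightarrow>
          take k ([] @ seqF N 0 bs) = take k ([] @ seqF N 0 bs') \<longrightarrow> take k (A \<omega> (Fs bs)) = take k (A \<omega> (Fs bs'))"
        proof (intro allI impI)
          fix k assume k: "k \<le> length ([] @ seqF N 0 bs)" "k \<le> length ([] @ seqF N 0 bs')"
            "take k ([] @ seqF N 0 bs) = take k ([] @ seqF N 0 bs')"
          have "take k (A \<omega> (Fs bs)) = A \<omega> (take k (Fs bs))"
            using cons[OF valid[OF bs(1)], of k] k by (simp add: Fs_def)
          also have "\<dots> = A \<omega> (take k (Fs bs'))" using k by (simp add: Fs_def)
          also have "\<dots> = take k (A \<omega> (Fs bs'))"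
            using cons[OF valid[OF bs(2)], of k] k by (simp add: Fs_def)
          finally show "take k (A \<omega> (Fs bs)) = take k (A \<omega> (Fs bs'))" .
        qed
      qed
      thus False using bs by simp
    qed
  qed
  have sumle: "(\<Sum>bs\<in>L. prob (E bs)) \<le> 1"
  proof -
    have "(\<Sum>bs\<in>L. prob (E bs)) = prob (\<Union>bs\<in>L. E bs)"
      by (rule finite_measure_finite_Union[symmetric]) (use finL Esets disj in auto)
    also have "\<dots> \<le> 1" by (rule prob_le_1)
    finally show ?thesis .
  qed
  have "\<exists>bs\<in>L. prob (E bs) \<le> 1 / 2 ^ S"
  proof (rule ccontr)
    assume "\<not> (\<exists>bs\<in>L. prob (E bs) \<le> 1 / 2 ^ S)"
    hence gt: "\<And>bs. bs \<in> L \<Longrightarrow> 1 / 2 ^ S < prob (E bs)" by force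
    have Lne: "L \<noteq> {}" using cardL by auto
    have "(\<Sum>bs\<in>L. (1 / 2 ^ S :: real)) < (\<Sum>bs\<in>L. prob (E bs))"
      by (rule sum_strict_mono[OF finL Lne gt])
    moreover have "(\<Sum>bs\<in>L. (1 / 2 ^ S :: real)) = 1" using cardL by simp
    ultimately show False using sumle by linarith
  qed
  then obtain bs0 where bs0: "bs0 \<in> L" "prob (E bs0) \<le> 1 / 2 ^ S" by blast
  define F where "F = Fs bs0"
  have vF: "valid_seq N R F" unfolding F_def by (rule valid[OF bs0(1)])
  have dF: "\<forall>f\<in>set F. dem f = 1" unfolding F_def by (rule dem1)
  have neF: "F \<noteq> []" unfolding F_def by (rule nonemp[OF bs0(1)])
  have Rp: "R > 0" "N > 0" using assms by auto
  have cm: "(\<lambda>\<omega>. congestion N R F (A \<omega> F)) \<in> borel_measurable M"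
    using measurable_compose[OF meas[OF vF], of "congestion N R F" borel] by simp
  have routF: "\<And>\<omega>. \<omega> \<in> space M \<Longrightarrow> is_routing N F (A \<omega> F)"
    using rout[OF bs0(1)] unfolding F_def by blast
  have intc: "integrable M (\<lambda>\<omega>. congestion N R F (A \<omega> F))"
  proof (rule integrable_const_bound[where B = "real (length F)"])
    show "AE x in M. norm (congestion N R F (A x F)) \<le> real (length F)"
    proof (rule AE_I2)
      fix x assume x: "x \<in> space M"
      have "1 \<le> congestion N R F (A x F)" by (rule cong_ge1[OF vF routF[OF x] dF neF])
      moreover have "congestion N R F (A x F) \<le> real (length F)" by (rule cong_le_len[OF dF Rp])
      ultimately show "norm (congestion N R F (A x F)) \<le> real (length F)" by simp
    qed
  qed (rule cm)
  have EF: "E bs0 \<in> sets M" by (rule Esets[OF bs0(1)])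
  have inti: "integrable M (\<lambda>\<omega>. 2 - indicator (E bs0) \<omega> :: real)"
  proof (rule integrable_const_bound[where B = 2])
    show "AE x in M. norm (2 - indicator (E bs0) x :: real) \<le> 2"
      by (rule AE_I2) (simp add: indicator_def)
    show "(\<lambda>\<omega>. 2 - indicator (E bs0) \<omega> :: real) \<in> borel_measurable M"
      using EF by measurable
  qed
  have low: "2 - indicator (E bs0) \<omega> \<le> congestion N R F (A \<omega> F)" if w: "\<omega> \<in> space M" for \<omega>
  proof (cases "\<omega> \<in> E bs0")
    case True
    thus ?thesis using cong_ge1[OF vF routF[OF w] dF neF] by simp
  next
    case False
    hence "\<not> goodpairs F (A \<omega> F)" using w unfolding E_def F_def by auto
    thus ?thesis using cong_ge2[OF vF routF[OF w] dF] False by simp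
  qed
  have "(\<integral>\<omega>. (2 - indicator (E bs0) \<omega> :: real) \<partial>M) = 2 - prob (E bs0)"
  proof -
    have "(\<integral>\<omega>. (2 - indicator (E bs0) \<omega> :: real) \<partial>M) = (\<integral>\<omega>. 2 \<partial>M) - (\<integral>\<omega>. indicator (E bs0) \<omega> \<partial>M)"
      by (rule Bochner_Integration.integral_diff) (use EF in \<open>auto intro!: integrable_real_indicator simp: emeasure_eq_measure\<close>)
    also have "\<dots> = 2 - prob (E bs0)"
      using EF sets.sets_into_space[OF EF] by (simp add: Int_absorb2 prob_space)
    finally show ?thesis .
  qed
  moreover have "(\<integral>\<omega>. (2 - indicator (E bs0) \<omega> :: real) \<partial>M) \<le> (\<integral>\<omega>. congestion N R F (A \<omega> F) \<partial>M)"
    by (rule integral_mono[OF inti intc low])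
  ultimately have "2 - 1 / 2 ^ S \<le> (\<integral>\<omega>. congestion N R F (A \<omega> F) \<partial>M)"
    using bs0(2) by linarith
  also have "\<dots> \<le> c * OPT N R F" by (rule bnd[OF vF])
  finally have main: "2 - 1 / 2 ^ S \<le> c * OPT N R F" .
  have o1: "OPT N R F \<le> 1" unfolding F_def Fs_def
    by (rule OPT_le1[OF N]) (use bs0(1) S3 Rp in \<open>auto simp: L_def\<close>)
  have o0: "0 \<le> OPT N R F" by (rule OPT_ge0[OF vF dF neF])
  have "(1::real) / 2 ^ S \<le> 1" by simp
  hence pos: "0 < 2 - (1::real) / 2 ^ S" by linarith
  show False
  proof (cases "c \<ge> 0")
    case True
    hence "c * OPT N R F \<le> c" using o1 by (simp add: mult_left_le)
    thus False using main assms(3) S_def by simp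
  next
    case False
    hence "c * OPT N R F \<le> 0" using o0 by (simp add: mult_nonpos_nonneg)
    thus False using main pos by simp
  qed
qed


end
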